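(* Fix a constant $c > 0$ and consider RLS-GP with $F = \{\mathrm{AND}, \mathrm{OR}\}$, $L = \{x_1, \ldots, x_n\}$, tree size limit $\ell \ge n$, target $h \in \{\mathrm{AND}_n, \mathrm{OR}_n\}$, using in each iteration a fresh training set of $s = n^c \lg^2 n$ inputs sampled uniformly at random from $\{0,1\}^n$, and terminating when the sampled error of its current solution is at most $c' \lg n$, where $c'$ is an appropriately large constant. Then with probability at least $1 - O(\log^2(n)/n)$, during the first $O(\log n)$ iterations and while the expected sampled error ($s$ times the generalisation error) of its current solution remains above $(c'/4)\lg n$, RLS-GP does not accept any mutation which (1) inserts a copy of a variable already present in the current solution, (2) inserts an undesired function node (an OR node when $h = \mathrm{AND}_n$, an AND node when $h = \mathrm{OR}_n$), or (3) increases the generalisation error of the current solution.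
   Context: Programs are finite rooted binary trees (the empty tree is allowed) whose internal nodes are labelled by binary Boolean functions from $F$ and whose leaves are labelled by literals from $L$; a program computes a Boolean function of $(x_1,\dots,x_n)$ in the obvious way. $\mathrm{AND}_n(x) = x_1 \wedge \dots \wedge x_n$, $\mathrm{OR}_n(x) = x_1 \vee \dots \vee x_n$. The generalisation error of $X$ is $|\{x \in \{0,1\}^n : X(x) \ne h(x)\}|/2^n$. In each iteration a fresh training set of $s$ inputs is drawn independently and uniformly at random from $\{0,1\}^n$; the sampled error $f(X)$ of a program $X$ in that iteration is the number of sampled inputs on which $X$ differs from $h$; parent and offspring are evaluated on the same training set. LeafCount$(X)$ is the number of leaves. HVL-Prime with subtree deletion, applied to a tree $X$: choose $op \in \{\mathrm{INS}, \mathrm{DEL}, \mathrm{SUB}\}$, a literal $l \in L$ and a function $g \in F$, independently and uniformly at random. If $X$ is empty, the result is the single leaf $l$. Otherwise: if $op = \mathrm{INS}$, choose a node $x$ of $X$ uniformly at random and replace it by a new node labelled $g$ whose two children are the subtree rooted at $x$ and a new leaf $l$, in uniformly random order; if $op = \mathrm{DEL}$, choose a node $x$ of $X$ (leaf or internal) uniformly at random and replace the parent of $x$ by the sibling of $x$; if $op = \mathrm{SUB}$, choose a leaf of $X$ uniformly at random and replace it by $l$. RLS-GP with tree size limit $\ell$: start with the empty tree $X$; in each iteration let $X' := $ HVL-Prime$(X)$, and if LeafCount$(X') \le \ell$ and $f(X') \le f(X)$ then set $X := X'$. $\lg$ is the base-2 logarithm; asymptotics are as $n \to \infty$. *)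

theory Defs
  imports "HOL-Probability.Probability"
begin

text \<open>Function symbols F = {AND, OR}; literals x_1..x_n are encoded as indices 0..n-1.\<close>
datatype fsym = AND | OR

datatype gp = E | L nat | N fsym gp gp

datatype mop = INS | DEL | SUB

definition inputs :: "nat \<Rightarrow> bool list set" where
  "inputs n = {x. length x = n}"

fun apply_f :: "fsym \<Rightarrow> bool \<Rightarrow> bool \<Rightarrow> bool" where
  "apply_f AND a b = (a \<and> b)"
| "apply_f OR a b = (a \<or> b)"

fun eval :: "gp \<Rightarrow> bool list \<Rightarrow> bool" where
  "eval E x = False"
| "eval (L i) x = x ! i"
| "eval (N g a b) x = apply_f g (eval a x) (eval b x)"

definition target :: "fsym \<Rightarrow> nat \<Rightarrow> bool list \<Rightarrow> bool" where
  "target h n x = (case h of AND \<Rightarrow> (\<forall>i<n. x ! i) | OR \<Rightarrow> (\<exists>i<n. x ! i))"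

text \<open>Convention: the empty tree is wrong on every input (worst possible program).\<close>
definition wrong :: "fsym \<Rightarrow> nat \<Rightarrow> gp \<Rightarrow> bool list \<Rightarrow> bool" where
  "wrong h n X x = (X = E \<or> eval X x \<noteq> target h n x)"

definition gen_err :: "fsym \<Rightarrow> nat \<Rightarrow> gp \<Rightarrow> real" where
  "gen_err h n X = real (card {x \<in> inputs n. wrong h n X x}) / 2 ^ n"

definition samp_err :: "fsym \<Rightarrow> nat \<Rightarrow> bool list list \<Rightarrow> gp \<Rightarrow> nat" where
  "samp_err h n T X = length (filter (wrong h n X) T)"

fun leafcount :: "gp \<Rightarrow> nat" where
  "leafcount E = 0"
| "leafcount (L i) = 1"
| "leafcount (N g a b) = leafcount a + leafcount b"

fun vars :: "gp \<Rightarrow> nat set" where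
  "vars E = {}"
| "vars (L i) = {i}"
| "vars (N g a b) = vars a \<union> vars b"

text \<open>Node positions as paths (False = left child, True = right child).\<close>
fun positions :: "gp \<Rightarrow> bool list set" where
  "positions E = {}"
| "positions (L i) = {[]}"
| "positions (N g a b) = insert [] ((Cons False) ` positions a \<union> (Cons True) ` positions b)"

fun leafpos :: "gp \<Rightarrow> bool list set" where
  "leafpos E = {}"
| "leafpos (L i) = {[]}"
| "leafpos (N g a b) = (Cons False) ` leafpos a \<union> (Cons True) ` leafpos b"

fun subt :: "gp \<Rightarrow> bool list \<Rightarrow> gp" where
  "subt t [] = t"
| "subt (N g a b) (False # p) = subt a p"
| "subt (N g a b) (True # p) = subt b p"
| "subt t p = E"

fun repl :: "gp \<Rightarrow> bool list \<Rightarrow> gp \<Rightarrow> gp" where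
  "repl t [] u = u"
| "repl (N g a b) (False # p) u = N g (repl a p u) b"
| "repl (N g a b) (True # p) u = N g a (repl b p u)"
| "repl t p u = t"

text \<open>Subtree deletion at node p: the parent of p is replaced by the sibling of p;
  deleting the root yields the empty tree.\<close>
definition del_at :: "gp \<Rightarrow> bool list \<Rightarrow> gp" where
  "del_at X p = (if p = [] then E
     else repl X (butlast p) (subt X (butlast p @ [\<not> last p])))"

definition hvl :: "nat \<Rightarrow> gp \<Rightarrow> (mop \<times> nat \<times> fsym \<times> gp) pmf" where
  "hvl n X =
    bind_pmf (pmf_of_set {INS, DEL, SUB}) (\<lambda>op.
    bind_pmf (pmf_of_set {..<n}) (\<lambda>l.
    bind_pmf (pmf_of_set {AND, OR}) (\<lambda>g.
    map_pmf (\<lambda>X'. (op, l, g, X'))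
     (if X = E then return_pmf (L l)
      else (case op of
        INS \<Rightarrow> bind_pmf (pmf_of_set (positions X)) (\<lambda>p.
                 map_pmf (\<lambda>b. repl X p (if b then N g (subt X p) (L l) else N g (L l) (subt X p)))
                   (pmf_of_set {True, False}))
      | DEL \<Rightarrow> map_pmf (del_at X) (pmf_of_set (positions X))
      | SUB \<Rightarrow> map_pmf (\<lambda>p. repl X p (L l)) (pmf_of_set (leafpos X)))))))"

fun sample :: "nat \<Rightarrow> nat \<Rightarrow> bool list list pmf" where
  "sample 0 n = return_pmf []"
| "sample (Suc k) n = bind_pmf (pmf_of_set (inputs n)) (\<lambda>x. map_pmf (Cons x) (sample k n))"

definition lg :: "nat \<Rightarrow> real" where
  "lg n = log 2 (real n)"

definition tsize :: "real \<Rightarrow> nat \<Rightarrow> nat" where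
  "tsize c n = nat \<lceil>real n powr c * (lg n)^2\<rceil>"

definition bad_move :: "fsym \<Rightarrow> nat \<Rightarrow> gp \<Rightarrow> mop \<Rightarrow> nat \<Rightarrow> fsym \<Rightarrow> gp \<Rightarrow> bool" where
  "bad_move h n X op l g X' =
     ((op = INS \<and> X \<noteq> E \<and> l \<in> vars X)
    \<or> (op = INS \<and> X \<noteq> E \<and> g \<noteq> h)
    \<or> gen_err h n X' > gen_err h n X)"

text \<open>State: (current tree, observation window closed, bad acceptance seen).
  The window closes when RLS-GP terminates or when the expected sampled error
  s * gen_err drops to at most (c'/4) lg n.\<close>
definition step :: "real \<Rightarrow> real \<Rightarrow> nat \<Rightarrow> nat \<Rightarrow> fsym \<Rightarrow> gp \<times> bool \<times> bool \<Rightarrow> (gp \<times> bool \<times> bool) pmf" where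
  "step c c' n sizelim h st = (case st of (X, stopped, bad) \<Rightarrow>
     if stopped then return_pmf st
     else if real (tsize c n) * gen_err h n X \<le> c' / 4 * lg n then return_pmf (X, True, bad)
     else bind_pmf (sample (tsize c n) n) (\<lambda>T.
       if real (samp_err h n T X) \<le> c' * lg n then return_pmf (X, True, bad)
       else map_pmf (\<lambda>(op, l, g, X').
              let acc = (leafcount X' \<le> sizelim \<and> samp_err h n T X' \<le> samp_err h n T X)
              in (if acc then X' else X, False, bad \<or> (acc \<and> bad_move h n X op l g X')))
            (hvl n X)))"

fun run :: "real \<Rightarrow> real \<Rightarrow> nat \<Rightarrow> nat \<Rightarrow> fsym \<Rightarrow> nat \<Rightarrow> (gp \<times> bool \<times> bool) pmf" where
  "run c c' n sizelim h 0 = return_pmf (E, False, False)"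
| "run c c' n sizelim h (Suc k) = bind_pmf (run c c' n sizelim h k) (step c c' n sizelim h)"

end

theory Submission
  imports Defs
begin


definition hv :: "fsym \<Rightarrow> bool" where "hv h = (h = AND)"

fun htree :: "fsym \<Rightarrow> gp \<Rightarrow> bool" where
  "htree h E = False"
| "htree h (L i) = True"
| "htree h (N g a b) = (g = h \<and> htree h a \<and> htree h b \<and> vars a \<inter> vars b = {})"

fun outv :: "gp \<Rightarrow> bool list \<Rightarrow> nat set" where
  "outv (N g a b) (False # p) = outv a p \<union> vars b"
| "outv (N g a b) (True # p) = vars a \<union> outv b p"
| "outv t p = {}"

lemma apply_f_h: "(apply_f h a b = hv h) = (a = hv h \<and> b = hv h)"
  by (cases h) (auto simp: hv_def)

lemma apply_f_nh: "g \<noteq> h \<Longrightarrow> (apply_f g a b = hv h) = (a = hv h \<or> b = hv h)"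
  by (cases h; cases g) (auto simp: hv_def)

lemma target_hv: "(target h n x = hv h) = (\<forall>i<n. x ! i = hv h)"
  by (cases h) (auto simp: hv_def target_def)

lemma eval_htree: "htree h X \<Longrightarrow> (eval X x = hv h) = (\<forall>i\<in>vars X. x ! i = hv h)"
  by (induction X) (auto simp: apply_f_h)

lemma finite_vars[simp]: "finite (vars X)"
  by (induction X) auto

lemma htree_vars_ne: "htree h X \<Longrightarrow> vars X \<noteq> {}"
  by (induction X) auto

lemma htree_nE: "htree h X \<Longrightarrow> X \<noteq> E"
  by auto

lemma wrong_good:
  assumes "htree h X" "vars X \<subseteq> {..<n}"
  shows "wrong h n X x = ((\<forall>i\<in>vars X. x ! i = hv h) \<and> \<not> (\<forall>i<n. x ! i = hv h))"
proof -
  have e: "(eval X x = hv h) = (\<forall>i\<in>vars X. x ! i = hv h)" using eval_htree assms(1) .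
  have t: "(target h n x = hv h) = (\<forall>i<n. x ! i = hv h)" by (rule target_hv)
  have "X \<noteq> E" using assms(1) by auto
  then show ?thesis using e t assms(2) unfolding wrong_def by auto
qed

lemma finite_positions[simp]: "finite (positions X)"
  by (induction X) auto

lemma finite_leafpos[simp]: "finite (leafpos X)"
  by (induction X) auto

lemma positions_ne: "X \<noteq> E \<Longrightarrow> positions X \<noteq> {}"
  by (cases X) auto

lemma leafpos_ne: "htree h X \<Longrightarrow> leafpos X \<noteq> {}"
  by (induction X) auto

lemma L1: "htree h X \<Longrightarrow> p \<in> positions X \<Longrightarrow>
   (eval (repl X p u) x = hv h) = ((\<forall>i\<in>outv X p. x ! i = hv h) \<and> eval u x = hv h)"
proof (induction X arbitrary: p)
  case (N g a b)
  have g: "g = h" "htree h a" "htree h b" using N.prems by auto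
  show ?case
  proof (cases p)
    case Nil then show ?thesis by simp
  next
    case (Cons d q)
    show ?thesis
    proof (cases d)
      case True
      then have q: "q \<in> positions b" using N.prems Cons by auto
      have "(eval (repl (N g a b) p u) x = hv h) = (eval a x = hv h \<and> eval (repl b q u) x = hv h)"
        using Cons True g by (simp add: apply_f_h)
      also have "\<dots> = ((\<forall>i\<in>vars a. x ! i = hv h) \<and> (\<forall>i\<in>outv b q. x ! i = hv h) \<and> eval u x = hv h)"
        using N.IH(2)[OF g(3) q] eval_htree[OF g(2)] by simp
      finally show ?thesis using Cons True by auto
    next
      case False
      then have q: "q \<in> positions a" using N.prems Cons by auto
      have "(eval (repl (N g a b) p u) x = hv h) = (eval (repl a q u) x = hv h \<and> eval b x = hv h)"
        using Cons False g by (simp add: apply_f_h)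
      also have "\<dots> = ((\<forall>i\<in>outv a q. x ! i = hv h) \<and> eval u x = hv h \<and> (\<forall>i\<in>vars b. x ! i = hv h))"
        using N.IH(1)[OF g(2) q] eval_htree[OF g(3)] by simp
      finally show ?thesis using Cons False by auto
    qed
  qed
qed auto

lemma L2: "p \<in> positions X \<Longrightarrow> vars X = outv X p \<union> vars (subt X p)"
  by (induction X arbitrary: p) auto

lemma L3: "htree h X \<Longrightarrow> p \<in> positions X \<Longrightarrow> outv X p \<inter> vars (subt X p) = {}"
proof (induction X arbitrary: p)
  case (N g a b)
  then show ?case using L2 by fastforce
qed auto

lemma L4: "htree h X \<Longrightarrow> p \<in> positions X \<Longrightarrow> htree h (subt X p)"
  by (induction X arbitrary: p) auto

lemma L6: "p \<in> positions X \<Longrightarrow> vars (repl X p u) = outv X p \<union> vars u"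
  by (induction X arbitrary: p) auto

lemma L5: "htree h X \<Longrightarrow> p \<in> positions X \<Longrightarrow> htree h u \<Longrightarrow> outv X p \<inter> vars u = {} \<Longrightarrow> htree h (repl X p u)"
proof (induction X arbitrary: p)
  case (N g a b)
  then show ?case using L6 L2 by fastforce
qed auto

lemma L9: "p \<in> leafpos X \<Longrightarrow> p \<in> positions X \<and> (\<exists>j. subt X p = L j)"
  by (induction X arbitrary: p) auto

lemma L12: "q @ [d] \<in> positions X \<Longrightarrow> q \<in> positions X \<and> (\<exists>g a b. subt X q = N g a b \<and>
   subt X (q @ [d]) = (if d then b else a) \<and> subt X (q @ [\<not> d]) = (if d then a else b))"
proof (induction q arbitrary: X)
  case Nil
  then show ?case by (cases X) auto
next
  case (Cons e q)
  then obtain g0 a0 b0 where X: "X = N g0 a0 b0" by (cases X) auto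
  show ?case
  proof (cases e)
    case True
    then have "q @ [d] \<in> positions b0" using Cons.prems X by auto
    from Cons.IH[OF this] show ?thesis using X True by auto
  next
    case False
    then have "q @ [d] \<in> positions a0" using Cons.prems X by auto
    from Cons.IH[OF this] show ?thesis using X False by auto
  qed
qed



definition Wset :: "fsym \<Rightarrow> nat \<Rightarrow> gp \<Rightarrow> bool list set" where
  "Wset h n X = {x \<in> inputs n. wrong h n X x}"
definition Dset :: "fsym \<Rightarrow> nat \<Rightarrow> gp \<Rightarrow> gp \<Rightarrow> bool list set" where
  "Dset h n X X' = {x \<in> inputs n. wrong h n X' x \<and> \<not> wrong h n X x}"
definition good :: "fsym \<Rightarrow> nat \<Rightarrow> gp \<Rightarrow> bool" where
  "good h n Y = (Y = E \<or> (htree h Y \<and> vars Y \<subseteq> {..<n}))"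
definition caseB :: "fsym \<Rightarrow> nat \<Rightarrow> gp \<Rightarrow> gp \<Rightarrow> bool" where
  "caseB h n X X' = ((\<forall>x. wrong h n X x \<longrightarrow> wrong h n X' x) \<and> card (Wset h n X) \<le> 2 * card (Dset h n X X'))"
definition caseC :: "fsym \<Rightarrow> nat \<Rightarrow> gp \<Rightarrow> mop \<Rightarrow> nat \<Rightarrow> fsym \<Rightarrow> gp \<Rightarrow> bool" where
  "caseC h n X op l g X' = (\<not> bad_move h n X op l g X' \<and> good h n X' \<and> card (vars X') \<le> card (vars X) + 1)"

lemma finite_inputs[simp]: "finite (inputs n)"
proof -
  have "inputs n = {xs. set xs \<subseteq> UNIV \<and> length xs = n}" by (auto simp: inputs_def)
  then show ?thesis using finite_lists_length_eq[of "UNIV :: bool set" n] by simp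
qed

lemma card_inputs: "card (inputs n) = 2 ^ n"
proof -
  have "inputs n = {xs. set xs \<subseteq> UNIV \<and> length xs = n}" by (auto simp: inputs_def)
  then show ?thesis using card_lists_length_eq[of "UNIV :: bool set" n] by simp
qed

lemma finite_Dset[simp]: "finite (Dset h n X X')" and finite_Wset[simp]: "finite (Wset h n X)"
  by (auto simp: Dset_def Wset_def)

lemma Wsub:
  assumes "htree h X" "vars X \<subseteq> {..<n}"
    and mono: "\<forall>x. eval X x = hv h \<longrightarrow> X' = E \<or> eval X' x = hv h"
  shows "wrong h n X x \<longrightarrow> wrong h n X' x"
proof
  assume "wrong h n X x"
  then have a: "eval X x = hv h" "\<not> (\<forall>i<n. x ! i = hv h)"
    using wrong_good[OF assms(1,2)] eval_htree[OF assms(1)] by auto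
  then have "target h n x \<noteq> hv h" using target_hv by blast
  then show "wrong h n X' x" using mono a(1) unfolding wrong_def by auto
qed

lemma Dmem:
  assumes "htree h X" "length y = n" "eval X y \<noteq> hv h" "X' = E \<or> eval X' y = hv h"
    "\<not> (\<forall>i<n. y ! i = hv h)"
  shows "y \<in> Dset h n X X'"
proof -
  have "target h n y \<noteq> hv h" using target_hv assms(5) by blast
  then show ?thesis using assms unfolding Dset_def wrong_def inputs_def by auto
qed

lemma caseB_intro1:
  assumes ht: "htree h X" and vs: "vars X \<subseteq> {..<n}" and b0: "b0 \<in> vars X"
    and mono: "\<forall>x. eval X x = hv h \<longrightarrow> X' = E \<or> eval X' x = hv h"
    and phi: "\<forall>x. length x = n \<longrightarrow> (\<forall>i\<in>vars X. x ! i = hv h) \<longrightarrow> X' = E \<or> eval X' (x[b0 := \<not> hv h]) = hv h"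
  shows "caseB h n X X'"
proof -
  define f where "f = (\<lambda>x::bool list. x[b0 := \<not> hv h])"
  have b0n: "b0 < n" using b0 vs by auto
  have W: "x \<in> Wset h n X \<Longrightarrow> length x = n \<and> (\<forall>i\<in>vars X. x ! i = hv h)" for x
    using wrong_good[OF ht vs] by (auto simp: Wset_def inputs_def)
  have fD: "f ` Wset h n X \<subseteq> Dset h n X X'"
  proof
    fix y assume "y \<in> f ` Wset h n X"
    then obtain x where x: "x \<in> Wset h n X" "y = f x" by auto
    have lx: "length x = n" "\<forall>i\<in>vars X. x ! i = hv h" using W[OF x(1)] by auto
    have yb: "y ! b0 = (\<not> hv h)" using x lx b0n by (simp add: f_def)
    show "y \<in> Dset h n X X'"
    proof (rule Dmem[OF ht])
      show "length y = n" using x lx by (simp add: f_def)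
      show "eval X y \<noteq> hv h" using eval_htree[OF ht] yb b0 by auto
      show "X' = E \<or> eval X' y = hv h" using phi lx x by (simp add: f_def)
      show "\<not> (\<forall>i<n. y ! i = hv h)" using yb b0n by auto
    qed
  qed
  have inj: "inj_on f (Wset h n X)"
  proof (rule inj_onI)
    fix x y assume xy: "x \<in> Wset h n X" "y \<in> Wset h n X" "f x = f y"
    have xb: "x ! b0 = hv h" using W[OF xy(1)] b0 by auto
    have yb: "y ! b0 = hv h" using W[OF xy(2)] b0 by auto
    have "(f x)[b0 := hv h] = x[b0 := x ! b0]" using xb by (simp add: f_def)
    then have "x = (f x)[b0 := hv h]" by simp
    moreover have "(f y)[b0 := hv h] = y[b0 := y ! b0]" using yb by (simp add: f_def)
    then have "y = (f y)[b0 := hv h]" by simp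
    ultimately show "x = y" using xy(3) by simp
  qed
  have "card (Wset h n X) \<le> card (Dset h n X X')"
    using card_inj_on_le[OF inj fD] by simp
  then show ?thesis unfolding caseB_def using Wsub[OF ht vs mono] by auto
qed

lemma caseB_intro2:
  assumes ht: "htree h X" and vs: "vars X \<subseteq> {..<n}" and b0: "b0 \<in> vars X"
    and l: "l \<notin> vars X" "l < n"
    and mono: "\<forall>x. eval X x = hv h \<longrightarrow> X' = E \<or> eval X' x = hv h"
    and phi: "\<forall>x. length x = n \<longrightarrow> (\<forall>i\<in>vars X. x ! i = hv h) \<longrightarrow> X' = E \<or> eval X' (x[b0 := \<not> hv h, l := hv h]) = hv h"
  shows "caseB h n X X'"
proof -
  define f where "f = (\<lambda>x::bool list. x[b0 := \<not> hv h, l := hv h])"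
  have b0n: "b0 < n" using b0 vs by auto
  have bl: "b0 \<noteq> l" using b0 l by auto
  have W: "x \<in> Wset h n X \<Longrightarrow> length x = n \<and> (\<forall>i\<in>vars X. x ! i = hv h)" for x
    using wrong_good[OF ht vs] by (auto simp: Wset_def inputs_def)
  have fD: "f ` A \<subseteq> Dset h n X X'" if A: "A \<subseteq> Wset h n X" for A
  proof
    fix y assume "y \<in> f ` A"
    then obtain x where x: "x \<in> Wset h n X" "y = f x" using A by auto
    have lx: "length x = n" "\<forall>i\<in>vars X. x ! i = hv h" using W[OF x(1)] by auto
    have yb: "y ! b0 = (\<not> hv h)" using x lx b0n bl by (simp add: f_def)
    show "y \<in> Dset h n X X'"
    proof (rule Dmem[OF ht])
      show "length y = n" using x lx by (simp add: f_def)
      show "eval X y \<noteq> hv h" using eval_htree[OF ht] yb b0 by auto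
      show "X' = E \<or> eval X' y = hv h" using phi lx x by (simp add: f_def)
      show "\<not> (\<forall>i<n. y ! i = hv h)" using yb b0n by auto
    qed
  qed
  have inj: "inj_on f {x \<in> Wset h n X. x ! l = v}" for v
  proof (rule inj_onI)
    fix x y assume xy: "x \<in> {x \<in> Wset h n X. x ! l = v}" "y \<in> {x \<in> Wset h n X. x ! l = v}" "f x = f y"
    have g: "z = (f z)[b0 := hv h, l := v]" if "z ! b0 = hv h" "z ! l = v" for z
    proof -
      have "(f z)[b0 := hv h, l := v] = z[b0 := \<not> hv h, l := hv h, b0 := hv h, l := v]"
        unfolding f_def by simp
      also have "\<dots> = z[b0 := \<not> hv h, b0 := hv h, l := hv h, l := v]"
        using list_update_swap[OF bl[symmetric], of "z[b0 := \<not> hv h]" "hv h" "hv h"] by simp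
      also have "\<dots> = z[b0 := z ! b0, l := z ! l]" using that by simp
      also have "\<dots> = z" by simp
      finally show ?thesis by simp
    qed
    have "x = (f x)[b0 := hv h, l := v]" using W[of x] xy(1) b0 by (intro g) auto
    moreover have "y = (f y)[b0 := hv h, l := v]" using W[of y] xy(2) b0 by (intro g) auto
    ultimately show "x = y" using xy(3) by simp
  qed
  have c: "card {x \<in> Wset h n X. x ! l = v} \<le> card (Dset h n X X')" for v
    using card_inj_on_le[OF inj fD] by auto
  have "Wset h n X = {x \<in> Wset h n X. x ! l = True} \<union> {x \<in> Wset h n X. x ! l = False}" by auto
  then have "card (Wset h n X) \<le> card {x \<in> Wset h n X. x ! l = True} + card {x \<in> Wset h n X. x ! l = False}"
    by (metis card_Un_le)
  also have "\<dots> \<le> 2 * card (Dset h n X X')" using c[of True] c[of False] by simp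
  finally show ?thesis unfolding caseB_def using Wsub[OF ht vs mono] by auto
qed



lemma apply_f_comm: "apply_f g a b = apply_f g b a"
  by (cases g) auto

lemma gen_err_le: "card (Wset h n X') \<le> card (Wset h n X) \<Longrightarrow> gen_err h n X' \<le> gen_err h n X"
  unfolding gen_err_def Wset_def by (simp add: divide_right_mono)

lemma cls_E: "l < n \<Longrightarrow> caseC h n E op l g (L l)"
proof -
  assume l: "l < n"
  have "Wset h n (L l) \<subseteq> Wset h n E" by (auto simp: Wset_def wrong_def)
  then have "card (Wset h n (L l)) \<le> card (Wset h n E)" by (intro card_mono) auto
  then have "gen_err h n (L l) \<le> gen_err h n E" by (rule gen_err_le)
  then show ?thesis using l unfolding caseC_def bad_move_def good_def by auto
qed

lemma cls_INS:
  assumes ht: "htree h X" and vs: "vars X \<subseteq> {..<n}" and p: "p \<in> positions X" and l: "l < n"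
    and X': "X' = repl X p (if b then N g (subt X p) (L l) else N g (L l) (subt X p))"
  shows "l \<in> vars X \<or> caseB h n X X' \<or> caseC h n X INS l g X'"
proof (rule disjCI)
  assume lX: "\<not> (caseB h n X X' \<or> caseC h n X INS l g X')"
  show "l \<in> vars X"
  proof (rule ccontr)
    assume lv: "l \<notin> vars X"
    define S where "S = subt X p"
    define u where "u = (if b then N g S (L l) else N g (L l) S)"
    have X'u: "X' = repl X p u" using X' by (simp add: S_def u_def)
    have hS: "htree h S" using L4[OF ht p] by (simp add: S_def)
    have vS: "vars X = outv X p \<union> vars S" using L2[OF p] by (simp add: S_def)
    have dis: "outv X p \<inter> vars S = {}" using L3[OF ht p] by (simp add: S_def)
    have evX': "(eval X' x = hv h) = ((\<forall>i\<in>outv X p. x ! i = hv h) \<and> eval u x = hv h)" for x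
      using L1[OF ht p] X'u by simp
    have evX: "(eval X x = hv h) = (\<forall>i\<in>vars X. x ! i = hv h)" for x
      using eval_htree[OF ht] by simp
    have ueval: "(eval u x = hv h) = (apply_f g (eval S x) (x ! l) = hv h)" for x
      by (cases b) (auto simp: u_def apply_f_comm)
    have vu: "vars u = vars S \<union> {l}" by (cases b) (auto simp: u_def)
    show False
    proof (cases "g = h")
      case True
      have hu: "htree h u" using True hS lv vS by (cases b) (auto simp: u_def)
      have hX': "htree h X'" unfolding X'u
        by (rule L5[OF ht p hu]) (use dis vu lv vS in auto)
      have vX': "vars X' = insert l (vars X)" using L6[OF p] X'u vu vS by auto
      have "Wset h n X' \<subseteq> Wset h n X"
        using wrong_good[OF hX'] wrong_good[OF ht vs] vX' vs l by (auto simp: Wset_def)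
      then have "gen_err h n X' \<le> gen_err h n X" by (intro gen_err_le card_mono) auto
      moreover have "card (vars X') \<le> card (vars X) + 1" using vX' by (simp add: card_insert_le_m1 card_insert_if)
      ultimately have "caseC h n X INS l g X'"
        using lv True hX' vX' vs l unfolding caseC_def bad_move_def good_def by auto
      then show False using lX by auto
    next
      case False
      have ue: "(eval u x = hv h) = (eval S x = hv h \<or> x ! l = hv h)" for x
        using ueval apply_f_nh[OF False] by simp
      obtain b0 where b0: "b0 \<in> vars S" using htree_vars_ne[OF hS] by auto
      have "caseB h n X X'"
      proof (rule caseB_intro2[OF ht vs _ lv l])
        show "b0 \<in> vars X" using b0 vS by auto
        show "\<forall>x. eval X x = hv h \<longrightarrow> X' = E \<or> eval X' x = hv h"
          using evX evX' ue eval_htree[OF hS] vS by auto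
        show "\<forall>x. length x = n \<longrightarrow> (\<forall>i\<in>vars X. x ! i = hv h) \<longrightarrow>
            X' = E \<or> eval X' (x[b0 := \<not> hv h, l := hv h]) = hv h"
        proof (intro allI impI disjI2)
          fix x :: "bool list" assume x: "length x = n" "\<forall>i\<in>vars X. x ! i = hv h"
          have o: "\<forall>i\<in>outv X p. x[b0 := \<not> hv h, l := hv h] ! i = hv h"
          proof
            fix i assume i: "i \<in> outv X p"
            have "i \<noteq> b0" "i \<noteq> l" using i dis b0 lv vS by auto
            then show "x[b0 := \<not> hv h, l := hv h] ! i = hv h" using x i vS by simp
          qed
          have "x[b0 := \<not> hv h, l := hv h] ! l = hv h" using x l by simp
          then show "eval X' (x[b0 := \<not> hv h, l := hv h]) = hv h" using o evX' ue by simp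
        qed
      qed
      then show False using lX by auto
    qed
  qed
qed

lemma cls_DEL:
  assumes ht: "htree h X" and vs: "vars X \<subseteq> {..<n}" and p: "p \<in> positions X"
  shows "caseB h n X (del_at X p)"
proof (cases "p = []")
  case True
  obtain b0 where b0: "b0 \<in> vars X" using htree_vars_ne[OF ht] by auto
  show ?thesis using True by (intro caseB_intro1[OF ht vs b0]) (auto simp: del_at_def)
next
  case False
  define q where "q = butlast p"
  define d where "d = last p"
  have pq: "p = q @ [d]" using False by (simp add: q_def d_def)
  from L12[of q d X] p pq obtain g a b where q: "q \<in> positions X" and sq: "subt X q = N g a b"
    and sp: "subt X (q @ [d]) = (if d then b else a)" and ss: "subt X (q @ [\<not> d]) = (if d then a else b)"
    by auto
  define sib where "sib = (if d then a else b)"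
  define dl where "dl = (if d then b else a)"
  have X': "del_at X p = repl X q sib" using False ss by (simp add: del_at_def q_def d_def sib_def)
  have hN: "htree h (N g a b)" using L4[OF ht q] sq by simp
  then have hab: "htree h a" "htree h b" "vars a \<inter> vars b = {}" by auto
  have vX: "vars X = outv X q \<union> vars a \<union> vars b" using L2[OF q] sq by auto
  have dis: "outv X q \<inter> (vars a \<union> vars b) = {}" using L3[OF ht q] sq by auto
  have hdl: "htree h dl" "htree h sib" using hab by (auto simp: dl_def sib_def)
  obtain b0 where b0: "b0 \<in> vars dl" using htree_vars_ne[OF hdl(1)] by auto
  have b0': "b0 \<in> vars X" "b0 \<notin> outv X q" "b0 \<notin> vars sib"
    using b0 vX dis hab(3) by (auto simp: dl_def sib_def split: if_splits)
  have evX': "(eval (del_at X p) x = hv h) = ((\<forall>i\<in>outv X q. x ! i = hv h) \<and> (\<forall>i\<in>vars sib. x ! i = hv h))" for x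
    using L1[OF ht q] X' eval_htree[OF hdl(2)] by simp
  have vsib: "vars sib \<subseteq> vars X" using vX by (auto simp: sib_def)
  show ?thesis
  proof (rule caseB_intro1[OF ht vs b0'(1)])
    show "\<forall>x. eval X x = hv h \<longrightarrow> del_at X p = E \<or> eval (del_at X p) x = hv h"
      using evX' eval_htree[OF ht] vX vsib by auto
    show "\<forall>x. length x = n \<longrightarrow> (\<forall>i\<in>vars X. x ! i = hv h) \<longrightarrow>
        del_at X p = E \<or> eval (del_at X p) (x[b0 := \<not> hv h]) = hv h"
    proof (intro allI impI disjI2)
      fix x :: "bool list" assume x: "length x = n" "\<forall>i\<in>vars X. x ! i = hv h"
      have "\<forall>i\<in>outv X q. x[b0 := \<not> hv h] ! i = hv h"
      proof
        fix i assume "i \<in> outv X q" then have "i \<noteq> b0" "i \<in> vars X" using b0' vX by auto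
        then show "x[b0 := \<not> hv h] ! i = hv h" using x by simp
      qed
      moreover have "\<forall>i\<in>vars sib. x[b0 := \<not> hv h] ! i = hv h"
      proof
        fix i assume "i \<in> vars sib" then have "i \<noteq> b0" "i \<in> vars X" using b0' vsib by auto
        then show "x[b0 := \<not> hv h] ! i = hv h" using x by simp
      qed
      ultimately show "eval (del_at X p) (x[b0 := \<not> hv h]) = hv h" using evX' by simp
    qed
  qed
qed

definition swp :: "nat \<Rightarrow> nat \<Rightarrow> bool list \<Rightarrow> bool list" where
  "swp j l y = y[j := y ! l, l := y ! j]"

lemma swp_nth: "j < length y \<Longrightarrow> l < length y \<Longrightarrow> j \<noteq> l \<Longrightarrow>
  swp j l y ! i = (if i = j then y ! l else if i = l then y ! j else y ! i)"
  by (auto simp: swp_def nth_list_update)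

lemma length_swp[simp]: "length (swp j l y) = length y"
  by (simp add: swp_def)

lemma swp_swp: "j < length y \<Longrightarrow> l < length y \<Longrightarrow> j \<noteq> l \<Longrightarrow> swp j l (swp j l y) = y"
  by (rule nth_equalityI) (auto simp: swp_nth)

lemma cls_SUB:
  assumes ht: "htree h X" and vs: "vars X \<subseteq> {..<n}" and p: "p \<in> leafpos X" and l: "l < n"
  shows "caseB h n X (repl X p (L l)) \<or> caseC h n X SUB l g (repl X p (L l))"
proof -
  define X' where "X' = repl X p (L l)"
  obtain j where pp: "p \<in> positions X" and sj: "subt X p = L j" using L9[OF p] by auto
  have vX: "vars X = insert j (outv X p)" using L2[OF pp] sj by auto
  have jo: "j \<notin> outv X p" using L3[OF ht pp] sj by auto
  have evX': "(eval X' x = hv h) = ((\<forall>i\<in>outv X p. x ! i = hv h) \<and> x ! l = hv h)" for x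
    using L1[OF ht pp] by (simp add: X'_def)
  show ?thesis
  proof (cases "l \<in> outv X p")
    case True
    have jX: "j \<in> vars X" using vX by auto
    have "caseB h n X X'"
    proof (rule caseB_intro1[OF ht vs jX])
      show "\<forall>x. eval X x = hv h \<longrightarrow> X' = E \<or> eval X' x = hv h"
        using evX' eval_htree[OF ht] vX True by auto
      show "\<forall>x. length x = n \<longrightarrow> (\<forall>i\<in>vars X. x ! i = hv h) \<longrightarrow> X' = E \<or> eval X' (x[j := \<not> hv h]) = hv h"
      proof (intro allI impI disjI2)
        fix x :: "bool list" assume x: "length x = n" "\<forall>i\<in>vars X. x ! i = hv h"
        have o: "\<forall>i\<in>outv X p. x[j := \<not> hv h] ! i = hv h"
        proof
          fix i assume "i \<in> outv X p" then have "i \<noteq> j" "i \<in> vars X" using jo vX by auto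
          then show "x[j := \<not> hv h] ! i = hv h" using x by simp
        qed
        then show "eval X' (x[j := \<not> hv h]) = hv h" using evX' True by simp
      qed
    qed
    then show ?thesis by (simp add: X'_def)
  next
    case False
    have hX': "htree h X'" unfolding X'_def by (rule L5[OF ht pp]) (use False in auto)
    have vX': "vars X' = insert l (outv X p)" using L6[OF pp] by (simp add: X'_def)
    have vX'n: "vars X' \<subseteq> {..<n}" using vX' vX vs l by auto
    have cardX': "card (vars X') \<le> card (vars X) + 1"
    proof -
      have "vars X' \<subseteq> insert l (vars X)" using vX' vX by auto
      then have "card (vars X') \<le> card (insert l (vars X))" by (intro card_mono) auto
      also have "\<dots> \<le> card (vars X) + 1" by (simp add: card_insert_if)
      finally show ?thesis .
    qed
    have "card (Wset h n X') \<le> card (Wset h n X)"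
    proof (cases "l = j")
      case True
      then have "vars X' = vars X" using vX vX' by simp
      then have "Wset h n X' = Wset h n X"
        using wrong_good[OF hX' vX'n] wrong_good[OF ht vs] by (simp add: Wset_def)
      then show ?thesis by simp
    next
      case False
      have jn: "j < n" using vX vs by auto
      have W': "y \<in> Wset h n X' \<Longrightarrow> length y = n \<and> (\<forall>i\<in>outv X p. y ! i = hv h) \<and> y ! l = hv h \<and> \<not> (\<forall>i<n. y ! i = hv h)" for y
        using wrong_good[OF hX' vX'n] vX' by (auto simp: Wset_def inputs_def)
      have into: "swp j l ` Wset h n X' \<subseteq> Wset h n X"
      proof
        fix z assume "z \<in> swp j l ` Wset h n X'"
        then obtain y where y: "y \<in> Wset h n X'" "z = swp j l y" by auto
        note yy = W'[OF y(1)]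
        have lz: "length z = n" using y yy by (simp add: swp_def)
        have zn: "z ! i = (if i = j then y ! l else if i = l then y ! j else y ! i)" for i
          using swp_nth[of j y l i] y yy jn l False by simp
        have s1: "\<forall>i\<in>vars X. z ! i = hv h"
        proof
          fix i assume i: "i \<in> vars X"
          show "z ! i = hv h"
          proof (cases "i = j")
            case True then show ?thesis using zn yy by simp
          next
            case f: False
            then have "i \<in> outv X p" "i \<noteq> l" using i vX \<open>\<not> l \<in> outv X p\<close> by auto
            then show ?thesis using zn yy f by simp
          qed
        qed
        have s2: "\<not> (\<forall>i<n. z ! i = hv h)"
        proof
          assume a: "\<forall>i<n. z ! i = hv h"
          have "\<forall>i<n. y ! i = hv h"
          proof (intro allI impI)
            fix i assume i: "i < n"
            show "y ! i = hv h"
            proof (cases "i = j")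
              case True then show ?thesis using a zn[of l] l False by auto
            next
              case f: False
              show ?thesis
              proof (cases "i = l")
                case True then show ?thesis using a zn[of j] jn False by auto
              next
                case False then show ?thesis using a zn[of i] i f by auto
              qed
            qed
          qed
          then show False using yy by simp
        qed
        show "z \<in> Wset h n X" using wrong_good[OF ht vs] s1 s2 lz by (simp add: Wset_def inputs_def)
      qed
      have inj: "inj_on (swp j l) (Wset h n X')"
      proof (rule inj_onI)
        fix y z assume a: "y \<in> Wset h n X'" "z \<in> Wset h n X'" "swp j l y = swp j l z"
        have "y = swp j l (swp j l y)" using W'[OF a(1)] jn l False by (simp add: swp_swp)
        also have "\<dots> = swp j l (swp j l z)" using a(3) by simp
        also have "\<dots> = z" using W'[OF a(2)] jn l False by (simp add: swp_swp)
        finally show "y = z" .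
      qed
      show ?thesis using card_inj_on_le[OF inj into] by simp
    qed
    then have "gen_err h n X' \<le> gen_err h n X" by (rule gen_err_le)
    then have "caseC h n X SUB l g X'"
      using hX' vX'n cardX' unfolding caseC_def bad_move_def good_def by auto
    then show ?thesis by (simp add: X'_def)
  qed
qed






lemma prob_bind_pmf: "measure_pmf.prob (bind_pmf M f) A = measure_pmf.expectation M (\<lambda>x. measure_pmf.prob (f x) A)"
  unfolding measure_pmf_bind
  by (subst measure_pmf.measure_bind[where N="count_space UNIV"]) (auto simp: measure_subprob)

lemma prob_bind_le:
  assumes "\<And>m. m \<in> set_pmf M \<Longrightarrow> m \<notin> A \<Longrightarrow> measure_pmf.prob (f m) B \<le> e" "0 \<le> e"
  shows "measure_pmf.prob (bind_pmf M f) B \<le> measure_pmf.prob M A + e"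
proof -
  have "measure_pmf.prob (bind_pmf M f) B = measure_pmf.expectation M (\<lambda>x. measure_pmf.prob (f x) B)"
    by (rule prob_bind_pmf)
  also have "\<dots> \<le> measure_pmf.expectation M (\<lambda>x. indicator A x + e)"
  proof (rule integral_mono_AE)
    show "integrable (measure_pmf M) (\<lambda>x. measure_pmf.prob (f x) B)"
      by (rule measure_pmf.integrable_const_bound[where B=1]) auto
    show "integrable (measure_pmf M) (\<lambda>x. indicator A x + e)"
      by (rule measure_pmf.integrable_const_bound[where B="1 + \<bar>e\<bar>"]) (auto simp: indicator_def)
    show "AE x in measure_pmf M. measure_pmf.prob (f x) B \<le> indicator A x + e"
      using assms by (auto simp: AE_measure_pmf_iff indicator_def intro: order.trans[OF measure_pmf.prob_le_1])
  qed
  also have "\<dots> = measure_pmf.prob M A + e"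
    by (subst Bochner_Integration.integral_add) (auto simp: measure_pmf.emeasure_eq_measure)
  finally show ?thesis .
qed

lemma sample_prob: "measure_pmf.prob (sample k n) {T. \<forall>x\<in>set T. \<not> P x} =
   (real (card {x \<in> inputs n. \<not> P x}) / 2 ^ n) ^ k"
proof (induction k)
  case 0
  then show ?case by simp
next
  case (Suc k)
  define r where "r = real (card {x \<in> inputs n. \<not> P x}) / 2 ^ n"
  have ne: "inputs n \<noteq> {}" using card_inputs[of n] by auto
  have "measure_pmf.prob (sample (Suc k) n) {T. \<forall>x\<in>set T. \<not> P x} =
      measure_pmf.expectation (pmf_of_set (inputs n))
        (\<lambda>x. measure_pmf.prob (map_pmf ((#) x) (sample k n)) {T. \<forall>x\<in>set T. \<not> P x})"
    by (simp add: prob_bind_pmf)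
  also have "\<dots> = measure_pmf.expectation (pmf_of_set (inputs n)) (\<lambda>x. if P x then 0 else r ^ k)"
    by (rule Bochner_Integration.integral_cong) (auto simp: Suc r_def vimage_def)
  also have "\<dots> = (\<Sum>x\<in>inputs n. if P x then 0 else r ^ k) / card (inputs n)"
    using ne by (simp add: integral_pmf_of_set)
  also have "\<dots> = real (card {x \<in> inputs n. \<not> P x}) * r ^ k / 2 ^ n"
    by (simp add: sum.If_cases card_inputs Int_def)
  also have "\<dots> = r ^ Suc k" by (simp add: r_def)
  finally show ?case by (simp add: r_def)
qed


lemma filter_split:
  assumes "\<forall>x. P x \<longrightarrow> Q x"
  shows "length (filter Q T) = length (filter P T) + length (filter (\<lambda>x. Q x \<and> \<not> P x) T)"
proof (induction T)
  case Nil then show ?case by simp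
next
  case (Cons a T)
  show ?case
  proof (cases "P a")
    case True then have "Q a" using assms by blast
    then show ?thesis using Cons True by simp
  next
    case False then show ?thesis using Cons by simp
  qed
qed

lemma filter_le:
  assumes "\<forall>x. P x \<longrightarrow> Q x" "length (filter Q T) \<le> length (filter P T)"
  shows "\<forall>x\<in>set T. \<not> (Q x \<and> \<not> P x)"
proof -
  have "length (filter (\<lambda>x. Q x \<and> \<not> P x) T) = 0" using filter_split[OF assms(1), of T] assms(2) by simp
  then have "filter (\<lambda>x. Q x \<and> \<not> P x) T = []" by simp
  then show ?thesis by (simp add: filter_empty_conv)
qed


lemma hvl_char:
  assumes n: "n > 0" and gX: "good h n X" and m: "(op, l, g, X') \<in> set_pmf (hvl n X)"
  shows "l < n \<and> (X = E \<longrightarrow> X' = L l) \<and> (X \<noteq> E \<longrightarrow>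
     (op = INS \<longrightarrow> (\<exists>p\<in>positions X. \<exists>b. X' = repl X p (if b then N g (subt X p) (L l) else N g (L l) (subt X p))))
   \<and> (op = DEL \<longrightarrow> (\<exists>p\<in>positions X. X' = del_at X p))
   \<and> (op = SUB \<longrightarrow> (\<exists>p\<in>leafpos X. X' = repl X p (L l))))"
proof (cases "X = E")
  case True
  have "{..<n} \<noteq> {}" using n by auto
  then show ?thesis using m n True unfolding hvl_def by auto
next
  case False
  then have ht: "htree h X" using gX by (simp add: good_def)
  have ne: "positions X \<noteq> {}" "leafpos X \<noteq> {}" using positions_ne[OF False] leafpos_ne[OF ht] by auto
  have "{..<n} \<noteq> {}" using n by auto
  then show ?thesis using m n ne False unfolding hvl_def by (cases op) (auto split: if_splits)
qed

lemma hvl_cls: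
  assumes n: "n > 0" and gX: "good h n X" and m: "(op, l, g, X') \<in> set_pmf (hvl n X)"
  shows "(op = INS \<and> l \<in> vars X) \<or> caseB h n X X' \<or> caseC h n X op l g X'"
proof -
  note c = hvl_char[OF n gX m]
  show ?thesis
  proof (cases "X = E")
    case True
    then show ?thesis using c cls_E by auto
  next
    case False
    then have ht: "htree h X" and vs: "vars X \<subseteq> {..<n}" using gX by (auto simp: good_def)
    show ?thesis
    proof (cases op)
      case INS
      then obtain p b where "p \<in> positions X" "X' = repl X p (if b then N g (subt X p) (L l) else N g (L l) (subt X p))"
        using c False by auto
      then show ?thesis using cls_INS[OF ht vs] c INS by blast
    next
      case DEL
      then obtain p where "p \<in> positions X" "X' = del_at X p" using c False by auto
      then show ?thesis using cls_DEL[OF ht vs] by blast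
    next
      case SUB
      then obtain p where "p \<in> leafpos X" "X' = repl X p (L l)" using c False by auto
      then show ?thesis using cls_SUB[OF ht vs] c SUB by blast
    qed
  qed
qed

lemma hvl_l: "n > 0 \<Longrightarrow> map_pmf (\<lambda>m. fst (snd m)) (hvl n X) = pmf_of_set {..<n}"
  unfolding hvl_def by (simp add: map_bind_pmf map_pmf_comp bind_return_pmf')

lemma probA: "n > 0 \<Longrightarrow> measure_pmf.prob (hvl n X) {m. fst m = INS \<and> fst (snd m) \<in> vars X} \<le> card (vars X) / n"
proof -
  assume n: "n > 0"
  have "measure_pmf.prob (hvl n X) {m. fst m = INS \<and> fst (snd m) \<in> vars X} \<le>
        measure_pmf.prob (hvl n X) ((\<lambda>m. fst (snd m)) -` vars X)"
    by (rule measure_pmf.finite_measure_mono) auto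
  also have "\<dots> = measure_pmf.prob (map_pmf (\<lambda>m. fst (snd m)) (hvl n X)) (vars X)" by simp
  also have "\<dots> = card ({..<n} \<inter> vars X) / n"
  proof -
    have "{..<n} \<noteq> {}" using n by auto
    then show ?thesis using n by (simp add: hvl_l measure_pmf_of_set)
  qed
  also have "\<dots> \<le> card (vars X) / n" by (intro divide_right_mono) (auto intro: card_mono)
  finally show ?thesis .
qed

lemma exp_bound:
  fixes d g :: real and s n :: nat
  assumes n: "n \<ge> 2" and c': "c' \<ge> 8" and w: "real s * g > c' / 4 * lg n" and dg: "g \<le> 2 * d" and d: "0 \<le> d" "d \<le> 1"
  shows "(1 - d) ^ s \<le> 1 / n"
proof -
  have "(1 - d) ^ s \<le> exp (- d) ^ s"
    using d exp_ge_add_one_self[of "-d"] by (intro power_mono) auto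
  also have "\<dots> = exp (- (real s * d))" by (simp add: exp_of_nat_mult[symmetric])
  also have "\<dots> \<le> exp (- ln n)"
  proof -
    have lnn: "0 \<le> ln (real n)" using n by simp
    have "ln (real n) \<le> lg n"
    proof -
      have "ln (real n) * ln 2 \<le> ln (real n) * 1"
        using lnn ln_2_less_1 by (intro mult_left_mono) auto
      then have "ln (real n) \<le> ln (real n) / ln 2"
        by (simp add: le_divide_eq)
      then show ?thesis by (simp add: lg_def log_def)
    qed
    also have "\<dots> \<le> c' / 8 * lg n"
    proof -
      have "0 \<le> lg n" using lnn \<open>ln n \<le> lg n\<close> by linarith
      moreover have "1 \<le> c' / 8" using c' by simp
      ultimately show ?thesis using mult_right_mono[of 1 "c'/8" "lg n"] by simp
    qed
    also have "\<dots> < real s * g / 2" using w by simp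
    also have "\<dots> \<le> real s * d"
    proof -
      have "real s * g \<le> real s * (2 * d)" using dg by (intro mult_left_mono) auto
      then show ?thesis by simp
    qed
    finally show ?thesis by simp
  qed
  also have "\<dots> = 1 / n" using n by (simp add: exp_minus inverse_eq_divide)
  finally show ?thesis .
qed




definition Good :: "fsym \<Rightarrow> nat \<Rightarrow> nat \<Rightarrow> gp \<times> bool \<times> bool \<Rightarrow> bool" where
  "Good h n t st = (\<not> snd (snd st) \<and> good h n (fst st) \<and> card (vars (fst st)) \<le> t)"

lemma step_bound:
  assumes n: "n \<ge> 2" and c': "c' \<ge> 8" and G: "Good h n t st"
  shows "measure_pmf.prob (step c c' n sizelim h st) {st'. \<not> Good h n (Suc t) st'} \<le> (real t + 1) / n"
proof -
  obtain X stp where st: "st = (X, stp, False)" and gX: "good h n X" and cX: "card (vars X) \<le> t"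
    using G unfolding Good_def by (cases st) auto
  have n0: "n > 0" using n by simp
  have nn: "0 \<le> (real t + 1) / n" by simp
  show ?thesis
  proof (cases "stp \<or> real (tsize c n) * gen_err h n X \<le> c' / 4 * lg n")
    case True
    then have "step c c' n sizelim h st = return_pmf (X, stp \<or> True, False)"
      unfolding step_def st by auto
    moreover have "Good h n (Suc t) (X, stp \<or> True, False)" using gX cX by (simp add: Good_def)
    ultimately show ?thesis using nn by simp
  next
    case False
    define s where "s = tsize c n"
    have win: "real s * gen_err h n X > c' / 4 * lg n" using False by (simp add: s_def)
    define R where "R = (\<lambda>T m. if real (samp_err h n T X) \<le> c' * lg n then (X, True, False)
       else (case m of (op, l, g, X') \<Rightarrow>
              let acc = (leafcount X' \<le> sizelim \<and> samp_err h n T X' \<le> samp_err h n T X)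
              in (if acc then X' else X, False, False \<or> (acc \<and> bad_move h n X op l g X'))))"
    have "step c c' n sizelim h st = bind_pmf (sample s n) (\<lambda>T. bind_pmf (hvl n X) (\<lambda>m. return_pmf (R T m)))"
      unfolding step_def st using False
      by (auto simp: s_def R_def map_pmf_def intro!: bind_pmf_cong)
    also have "\<dots> = bind_pmf (hvl n X) (\<lambda>m. map_pmf (\<lambda>T. R T m) (sample s n))"
      by (subst bind_commute_pmf) (simp add: map_pmf_def)
    finally have steq: "step c c' n sizelim h st = bind_pmf (hvl n X) (\<lambda>m. map_pmf (\<lambda>T. R T m) (sample s n))" .
    define A where "A = {m :: mop \<times> nat \<times> fsym \<times> gp. fst m = INS \<and> fst (snd m) \<in> vars X}"
    have "measure_pmf.prob (bind_pmf (hvl n X) (\<lambda>m. map_pmf (\<lambda>T. R T m) (sample s n))) {st'. \<not> Good h n (Suc t) st'}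
        \<le> measure_pmf.prob (hvl n X) A + 1 / n"
    proof (rule prob_bind_le)
      fix m assume m: "m \<in> set_pmf (hvl n X)" "m \<notin> A"
      obtain op l g X' where mm: "m = (op, l, g, X')" by (cases m) auto
      have cls: "caseB h n X X' \<or> caseC h n X op l g X'"
        using hvl_cls[OF n0 gX m(1)[unfolded mm]] m(2) mm by (auto simp: A_def)
      have pr: "measure_pmf.prob (map_pmf (\<lambda>T. R T m) (sample s n)) {st'. \<not> Good h n (Suc t) st'}
          = measure_pmf.prob (sample s n) {T. \<not> Good h n (Suc t) (R T m)}" by (simp add: vimage_def)
      show "measure_pmf.prob (map_pmf (\<lambda>T. R T m) (sample s n)) {st'. \<not> Good h n (Suc t) st'} \<le> 1 / n"
      proof (cases "caseC h n X op l g X'")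
        case True
        then have "{T. \<not> Good h n (Suc t) (R T m)} = {}"
          using gX cX unfolding caseC_def by (auto simp: R_def mm Good_def Let_def)
        then show ?thesis using pr by simp
      next
        case False
        then have cB: "caseB h n X X'" using cls by auto
        then have sub: "\<forall>x. wrong h n X x \<longrightarrow> wrong h n X' x" unfolding caseB_def by auto
        define Dp where "Dp = (\<lambda>x. wrong h n X' x \<and> \<not> wrong h n X x)"
        have "{T. \<not> Good h n (Suc t) (R T m)} \<subseteq> {T. \<forall>x\<in>set T. \<not> Dp x}"
        proof
          fix T assume "T \<in> {T. \<not> Good h n (Suc t) (R T m)}"
          then have "samp_err h n T X' \<le> samp_err h n T X"
            using gX cX by (auto simp: R_def mm Good_def Let_def split: if_splits)
          then have "length (filter (wrong h n X') T) \<le> length (filter (wrong h n X) T)"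
            by (simp add: samp_err_def)
          then have "\<forall>x\<in>set T. \<not> (wrong h n X' x \<and> \<not> wrong h n X x)" by (rule filter_le[OF sub])
          then show "T \<in> {T. \<forall>x\<in>set T. \<not> Dp x}" by (simp add: Dp_def)
        qed
        then have "measure_pmf.prob (sample s n) {T. \<not> Good h n (Suc t) (R T m)}
            \<le> measure_pmf.prob (sample s n) {T. \<forall>x\<in>set T. \<not> Dp x}"
          by (rule measure_pmf.finite_measure_mono) auto
        also have "\<dots> = (real (card {x \<in> inputs n. \<not> Dp x}) / 2 ^ n) ^ s" by (rule sample_prob)
        also have "\<dots> = (1 - real (card (Dset h n X X')) / 2 ^ n) ^ s"
        proof -
          have "inputs n = {x \<in> inputs n. \<not> Dp x} \<union> Dset h n X X'"
            "{x \<in> inputs n. \<not> Dp x} \<inter> Dset h n X X' = {}"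
            by (auto simp: Dset_def Dp_def)
          then have "card (inputs n) = card {x \<in> inputs n. \<not> Dp x} + card (Dset h n X X')"
            by (metis card_Un_disjoint finite_Dset finite_Un finite_inputs)
          then have "real (card (inputs n)) = real (card {x \<in> inputs n. \<not> Dp x}) + real (card (Dset h n X X'))"
            by simp
          then have "real (card {x \<in> inputs n. \<not> Dp x}) = 2 ^ n - real (card (Dset h n X X'))"
            by (simp add: card_inputs)
          then show ?thesis by (simp add: diff_divide_distrib)
        qed
        also have "\<dots> \<le> 1 / n"
        proof (rule exp_bound[OF n c' win])
          have "card (Wset h n X) \<le> 2 * card (Dset h n X X')" using cB unfolding caseB_def by auto
          then show "gen_err h n X \<le> 2 * (real (card (Dset h n X X')) / 2 ^ n)"
            unfolding gen_err_def Wset_def[symmetric] by (simp add: divide_right_mono)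
          show "0 \<le> real (card (Dset h n X X')) / 2 ^ n" by simp
          have "Dset h n X X' \<subseteq> inputs n" by (auto simp: Dset_def)
          then have "card (Dset h n X X') \<le> card (inputs n)" by (intro card_mono) auto
          then show "real (card (Dset h n X X')) / 2 ^ n \<le> 1" by (simp add: card_inputs)
        qed
        finally show ?thesis using pr by simp
      qed
    qed simp
    also have "\<dots> \<le> card (vars X) / n + 1 / n" using probA[OF n0, of X] by (simp add: A_def)
    also have "\<dots> \<le> (real t + 1) / n" using cX by (simp add: add_divide_distrib[symmetric] divide_right_mono)
    finally show ?thesis using steq by simp
  qed
qed

lemma run_bound:
  assumes n: "n \<ge> 2" and c': "c' \<ge> 8"
  shows "measure_pmf.prob (run c c' n sizelim h t) {st. \<not> Good h n t st} \<le> real t * (real t + 1) / n"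
proof (induction t)
  case 0
  have "Good h n 0 (E, False, False)" by (simp add: Good_def good_def)
  then show ?case by simp
next
  case (Suc t)
  have "measure_pmf.prob (run c c' n sizelim h (Suc t)) {st. \<not> Good h n (Suc t) st}
      \<le> measure_pmf.prob (run c c' n sizelim h t) {st. \<not> Good h n t st} + (real t + 1) / n"
    by simp (rule prob_bind_le, use step_bound[OF n c'] in auto)
  also have "\<dots> \<le> real t * (real t + 1) / n + (real t + 1) / n" using Suc by simp
  also have "\<dots> \<le> real (Suc t) * (real (Suc t) + 1) / n"
    by (simp add: add_divide_distrib[symmetric] divide_right_mono algebra_simps)
  finally show ?case .
qed


theorem lemma10:
  fixes c :: real
  assumes "c > 0"
  shows "\<exists>c0. \<forall>c' \<ge> c0. \<forall>K > 0. \<exists>C N. \<forall>n \<ge> N. \<forall>sizelim \<ge> n. \<forall>h \<in> {AND, OR}.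
           measure_pmf.prob (run c c' n sizelim h (nat \<lceil>K * lg n\<rceil>)) {st. snd (snd st)}
             \<le> C * (lg n)^2 / real n"
proof (rule exI[of _ "8::real"], intro allI impI)
  fix c' K :: real assume c': "8 \<le> c'" and K: "K > 0"
  show "\<exists>C N. \<forall>n \<ge> N. \<forall>sizelim \<ge> n. \<forall>h \<in> {AND, OR}.
           measure_pmf.prob (run c c' n sizelim h (nat \<lceil>K * lg n\<rceil>)) {st. snd (snd st)}
             \<le> C * (lg n)^2 / real n"
  proof (intro exI[of _ "(K + 1) * (K + 2)"] exI[of _ 2] allI impI ballI)
    fix n sizelim :: nat and h :: fsym assume n: "2 \<le> n" and "n \<le> sizelim" and "h \<in> {AND, OR}"
    define T where "T = nat \<lceil>K * lg n\<rceil>"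
    have lg1: "1 \<le> lg n"
    proof -
      have "log 2 (2::real) \<le> log 2 (real n)" using n by (subst log_le_cancel_iff) auto
      then show ?thesis by (simp add: lg_def)
    qed
    have x0: "0 \<le> K * lg n" using K lg1 by simp
    have T: "real T \<le> K * lg n + 1"
    proof -
      have "real T = real_of_int \<lceil>K * lg n\<rceil>" using x0 by (simp add: T_def)
      also have "\<dots> \<le> K * lg n + 1" using ceiling_correct[of "K * lg n"] by linarith
      finally show ?thesis .
    qed
    have T0: "0 \<le> real T" by simp
    have "measure_pmf.prob (run c c' n sizelim h T) {st. snd (snd st)}
        \<le> measure_pmf.prob (run c c' n sizelim h T) {st. \<not> Good h n T st}"
      by (rule measure_pmf.finite_measure_mono) (auto simp: Good_def)
    also have "\<dots> \<le> real T * (real T + 1) / n" by (rule run_bound[OF n c'])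
    also have "\<dots> \<le> (K + 1) * (K + 2) * (lg n)^2 / n"
    proof (rule divide_right_mono)
      have "real T * (real T + 1) \<le> (K * lg n + 1) * (K * lg n + 2)"
        using T T0 by (intro mult_mono) auto
      also have "\<dots> \<le> (K * lg n + lg n) * (K * lg n + 2 * lg n)"
        using lg1 K by (intro mult_mono) auto
      also have "\<dots> = (K + 1) * (K + 2) * (lg n)^2" by (simp add: algebra_simps power2_eq_square)
      finally show "real T * (real T + 1) \<le> (K + 1) * (K + 2) * (lg n)^2" .
    qed simp
    finally show "measure_pmf.prob (run c c' n sizelim h (nat \<lceil>K * lg n\<rceil>)) {st. snd (snd st)}
        \<le> (K + 1) * (K + 2) * (lg n)^2 / n" by (simp add: T_def)
  qed
qed

end
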